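(* Let $\mathcal H$, $V_0$ (bounded self-adjoint positive definite with bounded inverse), $\sigma>0$, $\lambda>0$, and $C:\mathcal H\to\mathbb R^k$ with $CC^\top$ invertible. Let $X:\mathcal H\to\mathbb R^t$ satisfy $X=ZC+JV_0^{1/2}$ with $Z\in\mathbb R^{t\times k}$ and $J:\mathcal H\to\mathbb R^t$ such that $CV_0^{-1/2}J^\top=0$. Let $W_\lambda=\sigma^{-2}\big(C(X^\top X+\sigma^2\lambda V_0)^{-1}C^\top\big)^{-1}$, $S=(CV_0^{-1}C^\top)^{-1}$ and $\Omega_\lambda=\sigma^{-2}Z^\top Z+\lambda S$. Then $W_\lambda\preceq\Omega_\lambda$ in the Loewner order.
   Context: $\preceq$ is the Loewner order on symmetric matrices; $\cdot^\top$ the adjoint. *)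

theory Defs
  imports "HOL-Analysis.Analysis"
begin

definition selfadjoint_op :: "('h::real_inner \<Rightarrow> 'h) \<Rightarrow> bool" where
  "selfadjoint_op T \<longleftrightarrow> (\<forall>x y. inner (T x) y = inner x (T y))"

definition posdef_op :: "('h::real_inner \<Rightarrow> 'h) \<Rightarrow> bool" where
  "posdef_op T \<longleftrightarrow> (\<forall>x. x \<noteq> 0 \<longrightarrow> 0 < inner x (T x))"

definition is_pos_sqrt :: "('h::real_inner \<Rightarrow> 'h) \<Rightarrow> ('h \<Rightarrow> 'h) \<Rightarrow> bool" where
  "is_pos_sqrt R V \<longleftrightarrow> bounded_linear R \<and> selfadjoint_op R \<and>
      (\<forall>x. 0 \<le> inner x (R x)) \<and> (\<forall>x. R (R x) = V x)"

definition loewner_le :: "real^'k^'k \<Rightarrow> real^'k^'k \<Rightarrow> bool" where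
  "loewner_le A B \<longleftrightarrow> (\<forall>v. v \<bullet> (A *v v) \<le> v \<bullet> (B *v v))"

end

theory Submission imports Defs begin
lemma inner_ext0: fixes a :: "'a::real_inner" shows "(\<And>x. x \<bullet> a = 0) \<Longrightarrow> a = 0"
  by (metis inner_eq_zero_iff)

lemma riesz:
  fixes f :: "'h::{real_inner,complete_space} \<Rightarrow> real"
  assumes bl: "bounded_linear f"
  shows "\<exists>w. \<forall>x. f x = x \<bullet> w"
proof (cases "\<forall>x. f x = 0")
  case True then show ?thesis by (intro exI[of _ 0]) simp
next
  case False
  interpret f: bounded_linear f by fact
  from False obtain x1 where x1: "f x1 \<noteq> 0" by blast
  define S where "S = {x. f x = 1}"
  have x1S: "x1 /\<^sub>R f x1 \<in> S" using x1 by (simp add: S_def f.scaleR)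
  define d where "d = Inf (norm ` S)"
  have bdd: "bdd_below (norm ` S)" by (rule bdd_belowI[of _ 0]) auto
  have dle: "d \<le> norm x" if "x \<in> S" for x
    unfolding d_def using bdd that by (intro cInf_lower) auto
  have d0: "0 \<le> d" unfolding d_def using x1S by (intro cInf_greatest) auto
  have "\<exists>x\<in>S. norm x < d + 1 / (real n + 1)" for n
  proof -
    have "Inf (norm ` S) < d + 1 / (real n + 1)" unfolding d_def by (simp add: add_pos_pos)
    then show ?thesis using x1S by (subst (asm) cInf_less_iff) (auto simp: bdd)
  qed
  then obtain xs where xsS: "\<And>n. xs n \<in> S" and xsn: "\<And>n. norm (xs n) < d + 1 / (real n + 1)"
    by metis
  define e where "e n = (2*d+1) / (real n + 1)" for n
  have xsq: "norm (xs n)^2 \<le> d^2 + e n" for n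
  proof -
    have a: "0 \<le> norm (xs n)" by simp
    have "norm (xs n)^2 \<le> (d + 1 / (real n + 1))^2"
      using xsn[of n] a by (intro power_mono) auto
    also have "\<dots> = d^2 + 2*d/(real n+1) + 1/(real n+1)^2"
      by (simp add: power2_sum power_divide)
    also have "1/(real n+1)^2 \<le> 1/(real n+1)"
      by (simp add: divide_simps power2_eq_square)
    hence "d^2 + 2*d/(real n+1) + 1/(real n+1)^2 \<le> d^2 + e n"
      by (simp add: e_def add_divide_distrib)
    finally show ?thesis .
  qed
  have mid: "4 * d^2 \<le> norm (xs n + xs m)^2" for n m
  proof -
    have "(1/2) *\<^sub>R (xs n + xs m) \<in> S" using xsS[of n] xsS[of m]
      by (simp add: S_def f.scaleR f.add)
    hence "d \<le> norm ((1/2) *\<^sub>R (xs n + xs m))" by (rule dle)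
    hence "d \<le> norm (xs n + xs m) / 2" by simp
    hence "2 * d \<le> norm (xs n + xs m)" by simp
    hence "(2*d)^2 \<le> norm (xs n + xs m)^2" using d0 by (intro power_mono) auto
    thus ?thesis by (simp add: power2_eq_square)
  qed
  have par: "norm (xs n - xs m)^2 \<le> 2 * e n + 2 * e m" for n m
  proof -
    have "norm (xs n - xs m)^2 + norm (xs n + xs m)^2 = 2 * norm (xs n)^2 + 2 * norm (xs m)^2"
      by (simp add: power2_norm_eq_inner inner_diff inner_add inner_commute)
    thus ?thesis using xsq[of n] xsq[of m] mid[of n m] by linarith
  qed
  have "Cauchy xs"
  proof (rule metric_CauchyI)
    fix eps :: real assume eps: "0 < eps"
    obtain N :: nat where N: "4*(2*d+1) / eps^2 < real N" using reals_Archimedean2 by blast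
    have "\<forall>m\<ge>N. \<forall>n\<ge>N. dist (xs m) (xs n) < eps"
    proof (intro allI impI)
      fix m n assume mN: "m \<ge> N" and nN: "n \<ge> N"
      have eN: "e k \<le> (2*d+1) / (real N + 1)" if "k \<ge> N" for k
        unfolding e_def using that d0 by (intro divide_left_mono) auto
      have "(2*d+1) / (real N + 1) < eps^2/4"
      proof -
        have e2: "0 < eps^2" using eps by simp
        have "4*(2*d+1) < real N * eps^2" using N e2 by (simp add: pos_divide_less_eq)
        also have "\<dots> \<le> eps^2 * (real N + 1)" using e2 by (simp add: algebra_simps)
        finally have "4*(2*d+1) < eps^2 * (real N + 1)" .
        thus ?thesis by (simp add: field_simps)
      qed
      hence "norm (xs m - xs n)^2 < eps^2"
        using par[of m n] eN[OF mN] eN[OF nN] by linarith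
      hence "norm (xs m - xs n) < eps" using eps
        by (meson power2_less_imp_less less_imp_le)
      thus "dist (xs m) (xs n) < eps" by (simp add: dist_norm)
    qed
    thus "\<exists>M. \<forall>m\<ge>M. \<forall>n\<ge>M. dist (xs m) (xs n) < eps" by blast
  qed
  then obtain x0 where lim: "xs \<longlonglongrightarrow> x0" using Cauchy_convergent convergent_def by blast
  have "(\<lambda>n. f (xs n)) \<longlonglongrightarrow> f x0" using f.tendsto[OF lim] .
  moreover have "(\<lambda>n. f (xs n)) = (\<lambda>n. 1)" using xsS by (auto simp: S_def)
  ultimately have "(\<lambda>n. 1::real) \<longlonglongrightarrow> f x0" by simp
  hence fx0: "f x0 = 1" by (simp add: LIMSEQ_const_iff)
  have en: "(\<lambda>n. d + 1 / (real n + 1)) \<longlonglongrightarrow> d"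
    using tendsto_add[OF tendsto_const[of d] LIMSEQ_inverse_real_of_nat]
    by (simp add: inverse_eq_divide add.commute)
  have "norm x0 \<le> d"
    using tendsto_norm[OF lim] en by (rule LIMSEQ_le) (auto intro: less_imp_le xsn)
  hence minx: "norm x0 \<le> norm x" if "x \<in> S" for x using dle[OF that] by linarith
  have orth: "z \<bullet> x0 = 0" if fz: "f z = 0" for z
  proof (cases "z = 0")
    case True thus ?thesis by simp
  next
    case False
    define a where "a = z \<bullet> x0"
    define b where "b = z \<bullet> z"
    have b: "b > 0" using False by (simp add: b_def)
    have "x0 + (- a / b) *\<^sub>R z \<in> S" using fx0 fz by (simp add: S_def f.add f.diff f.scaleR)
    hence "norm x0 ^2 \<le> norm (x0 + (- a / b) *\<^sub>R z)^2"
      using minx by (intro power_mono) auto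
    also have "\<dots> = norm x0^2 + 2 * (-a/b) * a + (-a/b)^2 * b"
    proof -
      have gen: "norm (x0 + t *\<^sub>R z)^2 = norm x0^2 + 2 * t * (z \<bullet> x0) + t^2 * (z \<bullet> z)" for t
        unfolding power2_norm_eq_inner by (simp add: inner_add_left inner_add_right inner_commute power2_eq_square algebra_simps)
      show ?thesis unfolding gen a_def b_def ..
    qed
    also have "\<dots> = norm x0^2 - a^2 / b" using b by (simp add: power2_eq_square field_simps)
    finally have "a^2 / b \<le> 0" by simp
    hence "a^2 \<le> 0" using b by (simp add: divide_le_0_iff)
    thus ?thesis by (simp add: a_def)
  qed
  have x0nz: "x0 \<noteq> 0" using fx0 by auto
  show ?thesis
  proof (intro exI allI)
    fix y
    have "f (y - f y *\<^sub>R x0) = 0" by (simp add: f.diff f.scaleR fx0)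
    hence "(y - f y *\<^sub>R x0) \<bullet> x0 = 0" by (rule orth)
    hence "y \<bullet> x0 = f y * (x0 \<bullet> x0)" by (simp add: inner_diff_left)
    thus "f y = y \<bullet> (x0 /\<^sub>R (x0 \<bullet> x0))" using x0nz by (simp add: field_simps)
  qed
qed

lemma adj_ex:
  fixes C :: "'h::{real_inner,complete_space} \<Rightarrow> real^'n"
  assumes "bounded_linear C"
  shows "\<exists>g. \<forall>x y. C x \<bullet> y = x \<bullet> g y"
proof -
  have "\<forall>i. \<exists>w. \<forall>x. C x $ i = x \<bullet> w"
  proof
    fix i
    have "bounded_linear (\<lambda>x. C x $ i)"
      using bounded_linear_compose[OF bounded_linear_vec_nth assms] by simp
    thus "\<exists>w. \<forall>x. C x $ i = x \<bullet> w" by (rule riesz)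
  qed
  then obtain W where W: "\<And>i x. C x $ i = x \<bullet> W i" by metis
  show ?thesis
  proof (intro exI allI)
    fix x y
    show "C x \<bullet> y = x \<bullet> (\<Sum>i\<in>UNIV. (y $ i) *\<^sub>R W i)"
      by (simp add: inner_vec_def inner_sum_right W mult.commute)
  qed
qed

lemma adj_works:
  fixes C :: "'h::{real_inner,complete_space} \<Rightarrow> real^'n"
  assumes "bounded_linear C"
  shows "C x \<bullet> y = x \<bullet> adjoint C y"
proof -
  have "\<forall>x y. C x \<bullet> y = x \<bullet> adjoint C y"
    unfolding adjoint_def using adj_ex[OF assms] by (rule someI_ex)
  thus ?thesis by blast
qed

lemma inner_ext0': fixes a :: "'a::real_inner" shows "(\<And>x. a \<bullet> x = 0) \<Longrightarrow> a = 0"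
  by (metis inner_eq_zero_iff)

lemma adj_lin:
  fixes C :: "'h::{real_inner,complete_space} \<Rightarrow> real^'n"
  assumes "bounded_linear C"
  shows "linear (adjoint C)"
proof (rule linearI)
  fix a b :: "real^'n" and r :: real
  have "x \<bullet> (adjoint C (a + b) - adjoint C a - adjoint C b) = 0" for x
    by (simp add: inner_diff_right flip: adj_works[OF assms]) (simp add: inner_add_right)
  hence "adjoint C (a + b) - adjoint C a - adjoint C b = 0" by (metis inner_eq_zero_iff)
  thus "adjoint C (a + b) = adjoint C a + adjoint C b" by (simp add: algebra_simps)
  have "x \<bullet> (adjoint C (r *\<^sub>R a) - r *\<^sub>R adjoint C a) = 0" for x
    by (simp add: inner_diff_right flip: adj_works[OF assms])
  hence "adjoint C (r *\<^sub>R a) - r *\<^sub>R adjoint C a = 0" by (metis inner_eq_zero_iff)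
  thus "adjoint C (r *\<^sub>R a) = r *\<^sub>R adjoint C a" by simp
qed

lemma inv_right_mat:
  assumes "invertible (M::real^'n^'n)"
  shows "M *v (matrix_inv M *v v) = v"
proof -
  have "M ** matrix_inv M = mat 1"
    using assms unfolding invertible_def matrix_inv_def by (rule someI2_ex) auto
  thus ?thesis by (simp add: matrix_vector_mul_assoc)
qed

lemma inv_from_ker:
  assumes "\<And>u. (M::real^'n^'n) *v u = 0 \<Longrightarrow> u = 0"
  shows "invertible M"
  using assms by (simp add: invertible_left_inverse matrix_left_invertible_ker)

theorem lemmaC1:
  fixes V0 R :: "'h::{real_inner,complete_space} \<Rightarrow> 'h"
    and C :: "'h \<Rightarrow> real^'k"
    and X J :: "'h \<Rightarrow> real^'t"
    and Z :: "real^'k^'t"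
    and sig lam :: real
  assumes V0_bl: "bounded_linear V0"
    and V0_sa: "selfadjoint_op V0"
    and V0_pd: "posdef_op V0"
    and V0_bij: "bij V0"
    and V0_inv_bl: "bounded_linear (inv V0)"
    and R_sqrt: "is_pos_sqrt R V0"
    and sigma_pos: "sig > 0"
    and lambda_pos: "lam > 0"
    and C_bl: "bounded_linear C"
    and CCt_inv: "invertible (matrix (C \<circ> adjoint C))"
    and J_bl: "bounded_linear J"
    and X_def: "\<And>h. X h = Z *v C h + J (R h)"
    and orth: "\<And>y. C (inv R (adjoint J y)) = 0"
  shows "loewner_le
           ((1 / sig\<^sup>2) *\<^sub>R matrix_inv
              (matrix (C \<circ> inv (\<lambda>h. adjoint X (X h) + (sig\<^sup>2 * lam) *\<^sub>R V0 h) \<circ> adjoint C)))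
           ((1 / sig\<^sup>2) *\<^sub>R (transpose Z ** Z)
              + lam *\<^sub>R matrix_inv (matrix (C \<circ> inv V0 \<circ> adjoint C)))"
proof -
  interpret V0: bounded_linear V0 by fact
  interpret C: bounded_linear C by fact
  interpret J: bounded_linear J by fact
  have R_bl: "bounded_linear R" and R_sa: "\<And>x y. R x \<bullet> y = x \<bullet> R y"
    and RR: "\<And>x. R (R x) = V0 x"
    using R_sqrt by (auto simp: is_pos_sqrt_def selfadjoint_op_def)
  have V0sa: "\<And>x y. V0 x \<bullet> y = x \<bullet> V0 y" using V0_sa by (simp add: selfadjoint_op_def)
  have V0pd: "\<And>x. x \<noteq> 0 \<Longrightarrow> 0 < x \<bullet> V0 x" using V0_pd by (simp add: posdef_op_def)
  have V0pos: "0 \<le> x \<bullet> V0 x" for x using V0pd[of x] by (cases "x = 0") auto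
  have V0inv1: "V0 (inv V0 y) = y" for y using V0_bij by (simp add: bij_is_surj surj_f_inv_f)
  have V0inv2: "inv V0 (V0 x) = x" for x using V0_bij by (simp add: bij_is_inj)
  have V0i_lin: "linear (inv V0)" using V0_inv_bl bounded_linear.linear by blast
  have Xeq: "X = (\<lambda>h. Z *v C h + J (R h))" using X_def by auto
  have Zbl: "bounded_linear (\<lambda>x. Z *v x)"
    using matrix_vector_mul_linear linear_conv_bounded_linear by blast
  have X_bl: "bounded_linear X" unfolding Xeq
    by (intro bounded_linear_add bounded_linear_compose[OF Zbl C_bl]
        bounded_linear_compose[OF J_bl R_bl])
  interpret X: bounded_linear X by fact
  define Ct where "Ct = adjoint C"
  define Xt where "Xt = adjoint X"
  define Jt where "Jt = adjoint J"
  have Cadj: "\<And>x y. C x \<bullet> y = x \<bullet> Ct y" unfolding Ct_def by (rule adj_works[OF C_bl])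
  have Xadj: "\<And>x y. X x \<bullet> y = x \<bullet> Xt y" unfolding Xt_def by (rule adj_works[OF X_bl])
  have Jadj: "\<And>x y. J x \<bullet> y = x \<bullet> Jt y" unfolding Jt_def by (rule adj_works[OF J_bl])
  have Ct_lin: "linear Ct" unfolding Ct_def by (rule adj_lin[OF C_bl])
  have Xt_lin: "linear Xt" unfolding Xt_def by (rule adj_lin[OF X_bl])
  define c where "c = sig\<^sup>2 * lam"
  have c0: "c > 0" using sigma_pos lambda_pos by (simp add: c_def)
  define A where "A = (\<lambda>h. Xt (X h) + c *\<^sub>R V0 h)"
  have Aeq: "(\<lambda>h. adjoint X (X h) + (sig\<^sup>2 * lam) *\<^sub>R V0 h) = A"
    by (simp add: A_def Xt_def c_def)
  have Ainner: "x \<bullet> A y = X x \<bullet> X y + c * (x \<bullet> V0 y)" for x y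
    by (simp add: A_def inner_add_right Xadj)
  have Asym: "x \<bullet> A y = y \<bullet> A x" for x y
    by (simp add: Ainner inner_commute) (metis V0sa inner_commute)
  have Apos: "0 \<le> x \<bullet> A x" for x
    using V0pos[of x] c0 by (simp add: Ainner)
  have Apd: "x = 0" if "x \<bullet> A x = 0" for x
  proof (rule ccontr)
    assume "x \<noteq> 0"
    hence "0 < c * (x \<bullet> V0 x)" using V0pd c0 by simp
    moreover have "0 \<le> X x \<bullet> X x" by simp
    ultimately show False using that Ainner[of x x] by linarith
  qed
  have A_lin: "linear A" unfolding A_def
    by (intro linear_compose_add linear_compose[OF X.linear Xt_lin, unfolded o_def]
        linear_compose_scale_right V0.linear)
  have A_inj: "inj A"
  proof (rule injI)
    fix x y assume "A x = A y"
    hence "A (x - y) = 0" using A_lin by (simp add: linear_diff)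
    hence "(x - y) \<bullet> A (x - y) = 0" by simp
    hence "x - y = 0" by (rule Apd)
    thus "x = y" by simp
  qed
  have A_surj: "surj A"
  proof -
    { fix y
      define T where "T = (\<lambda>w::real^'t. c *\<^sub>R w + X (inv V0 (Xt w)))"
      have T_lin: "linear T" unfolding T_def
        by (intro linear_compose_add linear_compose_scale_right linear_id[unfolded id_def]
            linear_compose[OF linear_compose[OF Xt_lin V0i_lin] X.linear, unfolded o_def])
      have T_inj: "inj T"
      proof -
        have "w = 0" if "T w = 0" for w
        proof -
          define q where "q = inv V0 (Xt w)"
          have Vq: "V0 q = Xt w" by (simp add: q_def V0inv1)
          have "w \<bullet> X q = X q \<bullet> w" by (rule inner_commute)
          also have "\<dots> = q \<bullet> V0 q" by (simp add: Xadj Vq)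
          finally have "w \<bullet> X q = q \<bullet> V0 q" .
          hence "0 \<le> w \<bullet> X q" using V0pos by simp
          moreover have "0 = c * (w \<bullet> w) + w \<bullet> X q"
          proof -
            have "w \<bullet> T w = 0" using that by simp
            thus ?thesis by (simp add: T_def q_def inner_add_right)
          qed
          ultimately have "c * (w \<bullet> w) \<le> 0" by linarith
          hence "w \<bullet> w \<le> 0" using c0 by (simp add: mult_le_0_iff)
          thus "w = 0" by (metis inner_eq_zero_iff inner_ge_zero order_antisym)
        qed
        thus ?thesis using T_lin by (simp add: linear_inj_iff_eq_0)
      qed
      have "surj T" using eucl.linear_injective_imp_surjective[OF T_lin T_inj] by simp
      then obtain w where w: "T w = X (inv V0 y)" by (metis surjD)
      define h where "h = inv V0 ((1/c) *\<^sub>R (y - Xt w))"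
      have "X h = (1/c) *\<^sub>R (X (inv V0 y) - X (inv V0 (Xt w)))"
        by (simp add: h_def linear_diff[OF V0i_lin] linear_scale[OF V0i_lin] X.diff X.scaleR)
      also have "\<dots> = w"
      proof -
        have "X (inv V0 y) - X (inv V0 (Xt w)) = c *\<^sub>R w" using w by (simp add: T_def algebra_simps flip: w)
        thus ?thesis using c0 by simp
      qed
      finally have Xh: "X h = w" .
      have "A h = y" using c0 unfolding A_def Xh by (simp add: h_def V0inv1)
      hence "\<exists>h. A h = y" by blast }
    thus ?thesis by (metis surjI)
  qed
  have Ainv1: "A (inv A y) = y" for y using A_surj by (simp add: surj_f_inv_f)
  have Ainv2: "inv A (A x) = x" for x using A_inj by simp
  have Ai_lin: "linear (inv A)"
  proof (rule linearI)
    fix a b and r :: real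
    show "inv A (a + b) = inv A a + inv A b"
      by (metis A_inj injD Ainv1 A_lin linear_add)
    show "inv A (r *\<^sub>R a) = r *\<^sub>R inv A a"
      by (metis A_inj injD Ainv1 A_lin linear_scale)
  qed
  have CCt: "matrix (C \<circ> Ct) *v u = C (Ct u)" for u
    using linear_compose[OF Ct_lin C.linear] by (simp add: matrix_vector_mul(2))
  have Ct0: "u = 0" if "Ct u = 0" for u
  proof -
    have "matrix (C \<circ> Ct) *v u = 0" using that by (simp add: CCt)
    thus ?thesis using CCt_inv unfolding Ct_def
      by (simp add: invertible_left_inverse matrix_left_invertible_ker)
  qed
  define M where "M = matrix (C \<circ> inv A \<circ> Ct)"
  define N where "N = matrix (C \<circ> inv V0 \<circ> Ct)"
  have Mapp: "M *v u = C (inv A (Ct u))" for u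
    using linear_compose[OF Ct_lin linear_compose[OF Ai_lin C.linear]]
    by (simp add: M_def matrix_vector_mul(2) o_assoc)
  have Napp: "N *v u = C (inv V0 (Ct u))" for u
    using linear_compose[OF Ct_lin linear_compose[OF V0i_lin C.linear]]
    by (simp add: N_def matrix_vector_mul(2) o_assoc)
  have M_inv: "invertible M"
  proof (rule inv_from_ker)
    fix u assume "M *v u = 0"
    define g where "g = inv A (Ct u)"
    have "0 = u \<bullet> C g" using \<open>M *v u = 0\<close> by (simp add: Mapp g_def)
    also have "\<dots> = C g \<bullet> u" by (rule inner_commute)
    also have "\<dots> = g \<bullet> A g" by (simp add: Cadj g_def Ainv1)
    finally have "g = 0" using Apd by simp
    hence "Ct u = 0" using Ainv1[of "Ct u"] A_lin by (simp add: g_def linear_0)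
    thus "u = 0" by (rule Ct0)
  qed
  have N_inv: "invertible N"
  proof (rule inv_from_ker)
    fix u assume "N *v u = 0"
    define g where "g = inv V0 (Ct u)"
    have "0 = u \<bullet> C g" using \<open>N *v u = 0\<close> by (simp add: Napp g_def)
    also have "\<dots> = C g \<bullet> u" by (rule inner_commute)
    also have "\<dots> = g \<bullet> V0 g" by (simp add: Cadj g_def V0inv1)
    finally have "g = 0" using V0pd by force
    hence "Ct u = 0" using V0inv1[of "Ct u"] by (simp add: g_def)
    thus "u = 0" by (rule Ct0)
  qed
  have JR0: "J (R (inv V0 (Ct s))) = 0" for s
  proof -
    define h where "h = inv V0 (Ct s)"
    have Rsurj: "surj R" by (rule surjI[of R "\<lambda>y. R (inv V0 y)"]) (simp add: RR V0inv1)
    have "J (R h) \<bullet> y = 0" for y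
    proof -
      define p where "p = inv R (Jt y)"
      have Rp: "R p = Jt y" using Rsurj by (simp add: p_def surj_f_inv_f)
      have "J (R h) \<bullet> y = R h \<bullet> R p" by (simp add: Jadj Rp)
      also have "\<dots> = h \<bullet> V0 p" by (simp add: R_sa RR)
      also have "\<dots> = Ct s \<bullet> p" by (simp add: flip: V0sa) (simp add: h_def V0inv1)
      also have "\<dots> = C p \<bullet> s" by (simp add: Cadj inner_commute[of "Ct s" p])
      also have "\<dots> = 0" using orth[of y] by (simp add: p_def Jt_def)
      finally show ?thesis .
    qed
    thus ?thesis unfolding h_def[symmetric] by (rule inner_ext0')
  qed
  show ?thesis
    unfolding Aeq loewner_le_def Ct_def[symmetric] M_def[symmetric] N_def[symmetric]
  proof
    fix v :: "real^'k"
    define u where "u = matrix_inv M *v v"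
    define s where "s = matrix_inv N *v v"
    define g where "g = inv A (Ct u)"
    define h where "h = inv V0 (Ct s)"
    have Cg: "C g = v" using inv_right_mat[OF M_inv, of v] by (simp add: Mapp g_def u_def)
    have Ch: "C h = v" using inv_right_mat[OF N_inv, of v] by (simp add: Napp h_def s_def)
    have Ag: "A g = Ct u" by (simp add: g_def Ainv1)
    have Vh: "V0 h = Ct s" by (simp add: h_def V0inv1)
    have Xh: "X h = Z *v v" using JR0[of s] unfolding X_def Ch by (simp add: h_def)
    have hAh: "h \<bullet> A h = (Z *v v) \<bullet> (Z *v v) + c * (v \<bullet> s)"
      by (simp add: Ainner Xh Vh flip: Cadj) (simp add: Ch)
    have hAg: "h \<bullet> A g = v \<bullet> u" by (simp add: Ag flip: Cadj) (simp add: Ch)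
    have gAg: "g \<bullet> A g = v \<bullet> u" by (simp add: Ag flip: Cadj) (simp add: Cg)
    have "0 \<le> (h - g) \<bullet> A (h - g)" by (rule Apos)
    also have "\<dots> = h \<bullet> A h - h \<bullet> A g - g \<bullet> A h + g \<bullet> A g"
      by (simp add: linear_diff[OF A_lin] inner_diff_left inner_diff_right)
    also have "\<dots> = h \<bullet> A h - v \<bullet> u"
      using Asym[of g h] hAg gAg by simp
    finally have key: "v \<bullet> u \<le> (Z *v v) \<bullet> (Z *v v) + c * (v \<bullet> s)" using hAh by simp
    have ZZ: "v \<bullet> ((transpose Z ** Z) *v v) = (Z *v v) \<bullet> (Z *v v)"
      by (metis dot_lmul_matrix matrix_vector_mul_assoc vector_transpose_matrix)
    have L: "v \<bullet> (((1 / sig\<^sup>2) *\<^sub>R matrix_inv M) *v v) = (1/sig\<^sup>2) * (v \<bullet> u)"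
      by (simp add: u_def flip: scaleR_matrix_vector_assoc)
    have Rr: "v \<bullet> (((1 / sig\<^sup>2) *\<^sub>R (transpose Z ** Z) + lam *\<^sub>R matrix_inv N) *v v)
        = (1/sig\<^sup>2) * ((Z *v v) \<bullet> (Z *v v)) + lam * (v \<bullet> s)"
      by (simp add: s_def matrix_vector_mult_add_rdistrib inner_add_right ZZ
          flip: scaleR_matrix_vector_assoc)
    have "(1/sig\<^sup>2) * (v \<bullet> u) \<le> (1/sig\<^sup>2) * ((Z *v v) \<bullet> (Z *v v) + c * (v \<bullet> s))"
      using key sigma_pos by (intro mult_left_mono) auto
    also have "\<dots> = (1/sig\<^sup>2) * ((Z *v v) \<bullet> (Z *v v)) + lam * (v \<bullet> s)"
      using sigma_pos by (simp add: c_def field_simps)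
    finally show "v \<bullet> (((1 / sig\<^sup>2) *\<^sub>R matrix_inv M) *v v) \<le>
        v \<bullet> (((1 / sig\<^sup>2) *\<^sub>R (transpose Z ** Z) + lam *\<^sub>R matrix_inv N) *v v)"
      unfolding L Rr .
  qed
qed

end
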